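(* Let $k\ge5$ and $H=P_k$, the path on $k$ vertices. Then for every $p\in[0,1)$ there is no deterministic algorithm solving the Delayed $H$-Node-Deletion Problem with predictions that has both consistency less than $k-p(k-1)$ and robustness less than $k+\frac{p}{1-p}$.
   Context: All graphs are finite, simple and undirected. An induced copy of $H$ in $G$ is an induced subgraph isomorphic to $H$; $G$ is $H$-free if it has none. An online graph $G$ has vertices $v_1,\dots,v_n$ revealed one at a time; $G_t=G[\{v_1,\dots,v_t\}]$. Delayed $H$-Node-Deletion Problem with predictions: when $v_t$ is revealed the algorithm receives a bit $u_t(G)\in\{0,1\}$; it must choose sets $S_1\subseteq\dots\subseteq S_n$ with $S_t\subseteq V(G_t)$ and $G_t-S_t$ $H$-free for each $t$, where $S_t$ depends only on $G_t$ and $u_1(G),\dots,u_t(G)$; the cost is $|S_n|$. $\mathrm{OPT}(G)$ is the minimum size of $S\subseteq V(G)$ with $G-S$ $H$-free. The advice is correct if the set of vertices with bit $1$ is a minimum-size such set. An algorithm is $(r,w)$-competitive if there is a constant $\alpha\ge0$ such that for every online graph $G$: for some correct advice its cost is at most $r\cdot\mathrm{OPT}(G)+\alpha$, and for every advice (correct or not) its cost is at most $w\cdot\mathrm{OPT}(G)+\alpha$. Consistency (resp. robustness) is the infimum of such $r$ (resp. $w$). *)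

theory Defs
  imports Complex_Main
begin

text \<open>An online graph with n vertices v_1..v_n is represented on the vertex set
  {0..<n} (vertex v_t is the number t-1), with edge relation E :: nat => nat => bool.\<close>

definition simple_graph :: "('a \<Rightarrow> 'a \<Rightarrow> bool) \<Rightarrow> bool" where
  "simple_graph E \<longleftrightarrow> (\<forall>x y. E x y \<longrightarrow> E y x) \<and> (\<forall>x. \<not> E x x)"

definition has_induced_copy ::
  "'b set \<Rightarrow> ('b \<Rightarrow> 'b \<Rightarrow> bool) \<Rightarrow> 'a set \<Rightarrow> ('a \<Rightarrow> 'a \<Rightarrow> bool) \<Rightarrow> bool" where
  "has_induced_copy VH EH V E \<longleftrightarrow>
     (\<exists>f. f ` VH \<subseteq> V \<and> inj_on f VH \<and>
          (\<forall>x\<in>VH. \<forall>y\<in>VH. E (f x) (f y) \<longleftrightarrow> EH x y))"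

definition H_free ::
  "'b set \<Rightarrow> ('b \<Rightarrow> 'b \<Rightarrow> bool) \<Rightarrow> 'a set \<Rightarrow> ('a \<Rightarrow> 'a \<Rightarrow> bool) \<Rightarrow> bool" where
  "H_free VH EH V E \<longleftrightarrow> \<not> has_induced_copy VH EH V E"

definition path_V :: "nat \<Rightarrow> nat set" where
  "path_V k = {0..<k}"

definition path_E :: "nat \<Rightarrow> nat \<Rightarrow> bool" where
  "path_E i j \<longleftrightarrow> i + 1 = j \<or> j + 1 = i"

definition OPT ::
  "'b set \<Rightarrow> ('b \<Rightarrow> 'b \<Rightarrow> bool) \<Rightarrow> nat \<Rightarrow> (nat \<Rightarrow> nat \<Rightarrow> bool) \<Rightarrow> nat" where
  "OPT VH EH n E = (LEAST m. \<exists>S. S \<subseteq> {0..<n} \<and> card S = m \<and> H_free VH EH ({0..<n} - S) E)"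

definition correct_advice ::
  "'b set \<Rightarrow> ('b \<Rightarrow> 'b \<Rightarrow> bool) \<Rightarrow> nat \<Rightarrow> (nat \<Rightarrow> nat \<Rightarrow> bool) \<Rightarrow> (nat \<Rightarrow> bool) \<Rightarrow> bool" where
  "correct_advice VH EH n E u \<longleftrightarrow>
     (let S = {i. i < n \<and> u i} in
        H_free VH EH ({0..<n} - S) E \<and> card S = OPT VH EH n E)"

text \<open>A deterministic online algorithm is a function A; at time t it sees only the
  prefix graph G_t (edge relation restricted to {0..<t}) and the advice bits
  u_1..u_t (restricted to {0..<t}), and outputs S_t.\<close>
type_synonym algorithm = "nat \<Rightarrow> (nat \<Rightarrow> nat \<Rightarrow> bool) \<Rightarrow> (nat \<Rightarrow> bool) \<Rightarrow> nat set"

definition restrictE :: "nat \<Rightarrow> (nat \<Rightarrow> nat \<Rightarrow> bool) \<Rightarrow> nat \<Rightarrow> nat \<Rightarrow> bool" where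
  "restrictE t E = (\<lambda>x y. x < t \<and> y < t \<and> E x y)"

definition restrictU :: "nat \<Rightarrow> (nat \<Rightarrow> bool) \<Rightarrow> nat \<Rightarrow> bool" where
  "restrictU t u = (\<lambda>i. i < t \<and> u i)"

definition alg_set :: "algorithm \<Rightarrow> (nat \<Rightarrow> nat \<Rightarrow> bool) \<Rightarrow> (nat \<Rightarrow> bool) \<Rightarrow> nat \<Rightarrow> nat set" where
  "alg_set A E u t = A t (restrictE t E) (restrictU t u)"

definition valid_alg :: "'b set \<Rightarrow> ('b \<Rightarrow> 'b \<Rightarrow> bool) \<Rightarrow> algorithm \<Rightarrow> bool" where
  "valid_alg VH EH A \<longleftrightarrow>
     (\<forall>n E u. simple_graph E \<longrightarrow>
        (\<forall>t\<in>{1..n}. alg_set A E u t \<subseteq> {0..<t}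
                    \<and> H_free VH EH ({0..<t} - alg_set A E u t) E) \<and>
        (\<forall>t. 1 \<le> t \<and> t < n \<longrightarrow> alg_set A E u t \<subseteq> alg_set A E u (Suc t)))"

definition alg_cost :: "algorithm \<Rightarrow> nat \<Rightarrow> (nat \<Rightarrow> nat \<Rightarrow> bool) \<Rightarrow> (nat \<Rightarrow> bool) \<Rightarrow> nat" where
  "alg_cost A n E u = (if n = 0 then 0 else card (alg_set A E u n))"

definition competitive ::
  "'b set \<Rightarrow> ('b \<Rightarrow> 'b \<Rightarrow> bool) \<Rightarrow> algorithm \<Rightarrow> real \<Rightarrow> real \<Rightarrow> bool" where
  "competitive VH EH A r w \<longleftrightarrow>
     (\<exists>\<alpha>::real. \<alpha> \<ge> 0 \<and>
        (\<forall>n E. simple_graph E \<longrightarrow>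
           (\<exists>u. correct_advice VH EH n E u \<and>
                real (alg_cost A n E u) \<le> r * real (OPT VH EH n E) + \<alpha>) \<and>
           (\<forall>u. real (alg_cost A n E u) \<le> w * real (OPT VH EH n E) + \<alpha>)))"

end

theory Submission
  imports Defs
begin


definition Eof :: "(nat \<Rightarrow> nat) \<Rightarrow> nat \<Rightarrow> nat \<Rightarrow> bool" where
  "Eof l = (\<lambda>x y. path_E (l x) (l y))"

lemma simple_Eof: "simple_graph (Eof l)"
  unfolding simple_graph_def Eof_def path_E_def by auto

lemma transversal_copy:
  assumes "\<forall>i<k. \<exists>v\<in>V. l v = i"
  shows "has_induced_copy (path_V k) path_E V (Eof l)"
proof -
  define f where "f i = (SOME v. v \<in> V \<and> l v = i)" for i
  have f: "f i \<in> V \<and> l (f i) = i" if "i < k" for i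
    unfolding f_def using assms that by (metis (mono_tags, lifting) someI_ex)
  show ?thesis unfolding has_induced_copy_def
  proof (intro exI[of _ f] conjI)
    show "f ` path_V k \<subseteq> V" using f by (auto simp: path_V_def)
    show "inj_on f (path_V k)" unfolding inj_on_def path_V_def using f by (metis atLeastLessThan_iff)
    show "\<forall>x\<in>path_V k. \<forall>y\<in>path_V k. Eof l (f x) (f y) = path_E x y"
      using f by (auto simp: path_V_def Eof_def)
  qed
qed

lemma copy_hits_layers:
  assumes k4: "k \<ge> 4" and lk: "\<forall>v\<in>V. l v < k"
    and cp: "has_induced_copy (path_V k) path_E V (Eof l)"
    and ik: "i < k"
  shows "\<exists>v\<in>V. l v = i"
proof -
  obtain f where fV: "f ` {0..<k} \<subseteq> V"
    and fE: "\<forall>x\<in>{0..<k}. \<forall>y\<in>{0..<k}. path_E (l (f x)) (l (f y)) = path_E x y"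
    using cp unfolding has_induced_copy_def path_V_def Eof_def by blast
  define g where "g x = l (f x)" for x
  have gE: "path_E (g x) (g y) = path_E x y" if "x < k" "y < k" for x y
    using fE that unfolding g_def by auto
  have gk: "g x < k" if "x < k" for x using fV lk that unfolding g_def by (meson atLeastLessThan_iff image_subset_iff le0)
  have step: "int (g (Suc x)) - int (g x) = 1 \<or> int (g (Suc x)) - int (g x) = -1" if "Suc x < k" for x
    using gE[of x "Suc x"] that unfolding path_E_def by auto
  have ne2: "g (Suc (Suc x)) \<noteq> g x" if "Suc (Suc x) < k" for x
  proof
    assume eq: "g (Suc (Suc x)) = g x"
    show False
    proof (cases "Suc (Suc (Suc x)) < k")
      case True
      have "path_E (g (Suc (Suc x))) (g (Suc (Suc (Suc x))))"
        using gE[of "Suc (Suc x)" "Suc (Suc (Suc x))"] True unfolding path_E_def by auto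
      hence "path_E (g x) (g (Suc (Suc (Suc x))))" using eq by simp
      moreover have "\<not> path_E x (Suc (Suc (Suc x)))" unfolding path_E_def by auto
      ultimately show False using gE[of x "Suc (Suc (Suc x))"] True by auto
    next
      case False
      then have x1: "x \<ge> 1" using that k4 by linarith
      then obtain y where y: "x = Suc y" by (cases x) auto
      have "path_E (g y) (g x)" using gE[of y x] that y unfolding path_E_def by auto
      hence "path_E (g y) (g (Suc (Suc x)))" using eq by simp
      moreover have "\<not> path_E y (Suc (Suc x))" using y unfolding path_E_def by auto
      ultimately show False using gE[of y "Suc (Suc x)"] that y by auto
    qed
  qed
  define d where "d = int (g 1) - int (g 0)"
  have dconst: "Suc x < k \<longrightarrow> int (g (Suc x)) - int (g x) = d" for x
  proof (induction x)
    case 0 then show ?case by (simp add: d_def)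
  next
    case (Suc x)
    show ?case
    proof
      assume h: "Suc (Suc x) < k"
      have a: "int (g (Suc x)) - int (g x) = d" using Suc h by auto
      have b: "int (g (Suc (Suc x))) \<noteq> int (g x)" using ne2[OF h] by simp
      have c: "d = 1 \<or> d = -1" using step[of x] a h by auto
      show "int (g (Suc (Suc x))) - int (g (Suc x)) = d" using step[of "Suc x"] h a b c by auto
    qed
  qed
  have d1: "d = 1 \<or> d = -1" using step[of 0] k4 unfolding d_def by auto
  have lin: "x < k \<longrightarrow> int (g x) = int (g 0) + d * int x" for x
  proof (induction x)
    case 0 then show ?case by simp
  next
    case (Suc x) then show ?case using dconst[of x] by (auto simp: algebra_simps)
  qed
  have gk': "int (g x) < int k" if "x < k" for x using gk[OF that] by simp
  show ?thesis
  proof (cases "d = 1")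
    case True
    have "int (g (k - 1)) = int (g 0) + int (k - 1)" using lin[of "k-1"] k4 True by auto
    moreover have "int (g (k - 1)) < int k" using gk'[of "k-1"] k4 by auto
    ultimately have "g 0 = 0" using k4 by auto
    hence "g i = i" using lin[of i] ik True by auto
    thus ?thesis using fV ik unfolding g_def by (intro bexI[of _ "f i"]) auto
  next
    case False
    hence dm: "d = -1" using d1 by auto
    have "int (g (k - 1)) = int (g 0) - int (k - 1)" using lin[of "k-1"] k4 dm by auto
    moreover have "int (g 0) < int k" using gk'[of 0] k4 by auto
    ultimately have g0: "int (g 0) = int k - 1" using k4 by auto
    have "int (g (k - 1 - i)) = int (g 0) - int (k - 1 - i)" using lin[of "k-1-i"] ik dm by auto
    hence "g (k - 1 - i) = i" using g0 ik by auto
    thus ?thesis using fV ik unfolding g_def by (intro bexI[of _ "f (k-1-i)"]) auto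
  qed
qed



definition Uof :: "(nat \<Rightarrow> nat) \<Rightarrow> nat \<Rightarrow> bool" where
  "Uof l = (\<lambda>v. l v = 0)"

definition nextl :: "algorithm \<Rightarrow> nat \<Rightarrow> nat \<Rightarrow> (nat \<Rightarrow> nat) \<Rightarrow> nat" where
  "nextl A k t l = (LEAST i. i < k \<and> (\<forall>v<t. l v = i \<longrightarrow> v \<in> alg_set A (Eof l) (Uof l) t))"

primrec lay :: "algorithm \<Rightarrow> nat \<Rightarrow> nat \<Rightarrow> nat list" where
  "lay A k 0 = []"
| "lay A k (Suc t) = lay A k t @ [nextl A k t (\<lambda>v. lay A k t ! v)]"

definition run :: "algorithm \<Rightarrow> nat \<Rightarrow> nat \<Rightarrow> nat" where
  "run A k v = lay A k (Suc v) ! v"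

lemma alg_set_cong:
  assumes "\<forall>v<t. l v = l' v"
  shows "alg_set A (Eof l) (Uof l) t = alg_set A (Eof l') (Uof l') t"
proof -
  have "restrictE t (Eof l) = restrictE t (Eof l')"
    using assms unfolding restrictE_def Eof_def by (intro ext) auto
  moreover have "restrictU t (Uof l) = restrictU t (Uof l')"
    using assms unfolding restrictU_def Uof_def by (intro ext) auto
  ultimately show ?thesis unfolding alg_set_def by simp
qed

lemma nextl_cong:
  assumes "\<forall>v<t. l v = l' v"
  shows "nextl A k t l = nextl A k t l'"
  unfolding nextl_def using alg_set_cong[OF assms] assms by (metis)

lemma length_lay[simp]: "length (lay A k t) = t"
  by (induction t) auto

lemma lay_prefix: "v < t \<Longrightarrow> t \<le> t' \<Longrightarrow> lay A k t' ! v = lay A k t ! v"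
proof (induction t')
  case 0 then show ?case by simp
next
  case (Suc t')
  show ?case
  proof (cases "t = Suc t'")
    case True then show ?thesis by simp
  next
    case False
    hence "t \<le> t'" using Suc by auto
    moreover have "v < t'" using Suc.prems \<open>t \<le> t'\<close> by auto
    ultimately show ?thesis using Suc by (simp add: nth_append)
  qed
qed

lemma run_lay: "v < t \<Longrightarrow> lay A k t ! v = run A k v"
  unfolding run_def using lay_prefix[of v t "Suc v"] lay_prefix[of v "Suc v" t]
  by (cases "Suc v \<le> t") auto

lemma run_eq: "run A k t = nextl A k t (run A k)"
proof -
  have "run A k t = nextl A k t (\<lambda>v. lay A k t ! v)" unfolding run_def by (simp add: nth_append)
  also have "\<dots> = nextl A k t (run A k)" by (rule nextl_cong) (simp add: run_lay)
  finally show ?thesis .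
qed

lemma valid_mono:
  assumes "valid_alg VH EH A" "simple_graph E" "1 \<le> s" "s \<le> t"
  shows "alg_set A E u s \<subseteq> alg_set A E u t"
  using assms(4)
proof (induction t)
  case 0 then show ?case using assms(3) by simp
next
  case (Suc t)
  show ?case
  proof (cases "s = Suc t")
    case True then show ?thesis by simp
  next
    case False
    hence st: "s \<le> t" using Suc by auto
    have "alg_set A E u t \<subseteq> alg_set A E u (Suc t)"
      using assms(1,2) st assms(3) unfolding valid_alg_def by (meson le_trans lessI)
    then show ?thesis using Suc.IH[OF st] by auto
  qed
qed

lemma valid_free:
  assumes "valid_alg VH EH A" "simple_graph E" "1 \<le> t"
  shows "H_free VH EH ({0..<t} - alg_set A E u t) E \<and> alg_set A E u t \<subseteq> {0..<t}"
proof -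
  have "\<forall>t\<in>{1..t}. alg_set A E u t \<subseteq> {0..<t} \<and> H_free VH EH ({0..<t} - alg_set A E u t) E"
    using assms(1,2) unfolding valid_alg_def by blast
  thus ?thesis using assms(3) by auto
qed

context
  fixes A :: algorithm and k :: nat
  assumes valid: "valid_alg (path_V k) path_E A" and k1: "k \<ge> 1"
begin

abbreviation "l \<equiv> run A k"
abbreviation "S t \<equiv> alg_set A (Eof l) (Uof l) t"

lemma run_prop: "run A k t < k \<and> (\<forall>v<t. run A k v = run A k t \<longrightarrow> v \<in> S t)"
proof -
  have ex: "\<exists>i. i < k \<and> (\<forall>v<t. l v = i \<longrightarrow> v \<in> S t)"
  proof (rule ccontr)
    assume "\<not> ?thesis"
    hence all: "\<forall>i<k. \<exists>v\<in>{0..<t} - S t. l v = i"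
      by (metis (no_types, lifting) Diff_iff atLeastLessThan_iff zero_le)
    have "t \<ge> 1" using all k1 by fastforce
    have "H_free (path_V k) path_E ({0..<t} - S t) (Eof l)"
      using valid_free[OF valid simple_Eof \<open>t \<ge> 1\<close>] by auto
    thus False using transversal_copy[OF all] unfolding H_free_def by auto
  qed
  have eq: "run A k t = (LEAST i. i < k \<and> (\<forall>v<t. l v = i \<longrightarrow> v \<in> S t))"
    by (rule trans[OF run_eq]) (simp only: nextl_def)
  from LeastI_ex[OF ex] show ?thesis unfolding eq[symmetric] .
qed

lemma run_lt: "run A k v < k" using run_prop by auto

lemma S_mono: "1 \<le> s \<Longrightarrow> s \<le> t \<Longrightarrow> S s \<subseteq> S t"
  using valid_mono[OF valid simple_Eof] .

lemma earlier_deleted: "v < w \<Longrightarrow> w \<le> n \<Longrightarrow> l v = l w \<Longrightarrow> v \<in> S n"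
  using run_prop[of w] S_mono[of w n] by auto

end



definition Tl :: "algorithm \<Rightarrow> nat \<Rightarrow> nat \<Rightarrow> nat \<Rightarrow> nat set" where
  "Tl A k i n = {v. v < n \<and> run A k v = i}"
definition Last :: "algorithm \<Rightarrow> nat \<Rightarrow> nat \<Rightarrow> nat set" where
  "Last A k n = {v. v < n \<and> \<not> (\<exists>w. v < w \<and> w < n \<and> run A k w = run A k v)}"

context
  fixes A :: algorithm and k :: nat
  assumes valid: "valid_alg (path_V k) path_E A" and k1: "k \<ge> 1"
begin

abbreviation "Tl' \<equiv> Tl A k"
abbreviation "Last' \<equiv> Last A k"

lemma inj_Last: "inj_on (run A k) (Last' n)"
proof (rule inj_onI)
  fix x y assume x: "x \<in> Last' n" and y: "y \<in> Last' n" and e: "run A k x = run A k y"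
  show "x = y"
  proof (rule ccontr)
    assume "x \<noteq> y"
    then consider "x < y" | "y < x" by linarith
    then show False
      using x y e unfolding Last_def by (cases; auto)
  qed
qed

lemma card_Last: "card (Last' n) \<le> k"
proof -
  have "card (Last' n) = card (run A k ` Last' n)" using inj_Last by (simp add: card_image)
  also have "\<dots> \<le> card {0..<k}"
    by (rule card_mono) (auto simp: run_lt[OF valid k1])
  finally show ?thesis by simp
qed

lemma card_Last0: "card (Last' n - Tl' 0 n) \<le> k - 1"
proof -
  have "card (Last' n - Tl' 0 n) = card (run A k ` (Last' n - Tl' 0 n))"
    using inj_Last by (simp add: card_image inj_on_diff)
  also have "\<dots> \<le> card {1..<k}"
    by (rule card_mono) (auto simp: run_lt[OF valid k1] Tl_def Last_def Suc_le_eq)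
  finally show ?thesis by simp
qed

lemma D_sub: "{0..<n} - Last' n \<subseteq> S A k n"
  using earlier_deleted[OF valid k1] unfolding Last_def by fastforce

lemma card_S: "card (S A k n) + k \<ge> n"
proof -
  have fin: "finite (S A k n)" if "n \<ge> 1" using valid_free[OF valid simple_Eof that] finite_subset by blast
  show ?thesis
  proof (cases "n = 0")
    case True then show ?thesis by simp
  next
    case False
    have "n - card (Last' n) \<le> card ({0..<n} - Last' n)"
      using diff_card_le_card_Diff[of "Last' n" "{0..<n}"] Last_def by simp
    also have "\<dots> \<le> card (S A k n)" using D_sub fin False by (intro card_mono) auto
    finally show ?thesis using card_Last[of n] by linarith
  qed
qed

lemma card_cons:
  assumes "finite X" "S A k n \<union> Tl' 0 n \<subseteq> X"
  shows "card X + (k - 1) \<ge> n"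
proof -
  have sub: "{0..<n} - (Last' n - Tl' 0 n) \<subseteq> X" using D_sub assms(2) by auto
  have "n - card (Last' n - Tl' 0 n) \<le> card ({0..<n} - (Last' n - Tl' 0 n))"
    using diff_card_le_card_Diff[of "Last' n - Tl' 0 n" "{0..<n}"] Last_def by simp
  also have "\<dots> \<le> card X" using sub assms(1) by (rule card_mono[rotated])
  finally show ?thesis using card_Last0[of n] by linarith
qed

lemma sum_layers: "n = card (Tl' 0 n) + (\<Sum>j\<in>{1..<k}. card (Tl' j n))"
proof -
  have U: "{v. v < n \<and> run A k v \<noteq> 0} = (\<Union>j\<in>{1..<k}. Tl' j n)"
    using run_lt[OF valid k1] unfolding Tl_def by (auto simp: Suc_le_eq)
  have "card (\<Union>j\<in>{1..<k}. Tl' j n) = (\<Sum>j\<in>{1..<k}. card (Tl' j n))"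
    by (rule card_UN_disjoint) (auto simp: Tl_def)
  moreover have "{0..<n} = Tl' 0 n \<union> {v. v < n \<and> run A k v \<noteq> 0}" unfolding Tl_def by auto
  moreover have "card (Tl' 0 n \<union> {v. v < n \<and> run A k v \<noteq> 0}) = card (Tl' 0 n) + card {v. v < n \<and> run A k v \<noteq> 0}"
    by (rule card_Un_disjoint) (auto simp: Tl_def)
  ultimately show ?thesis using U by (metis card_atLeastLessThan diff_zero)
qed

lemma OPT_R:
  assumes k4: "k \<ge> 4" and j: "j < k"
  shows "OPT (path_V k) path_E n (Eof (run A k)) \<le> card (Tl' j n)"
proof -
  have "H_free (path_V k) path_E ({0..<n} - Tl' j n) (Eof (run A k))"
    unfolding H_free_def
  proof
    assume "has_induced_copy (path_V k) path_E ({0..<n} - Tl' j n) (Eof (run A k))"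
    from copy_hits_layers[OF k4 _ this j] run_lt[OF valid k1]
    show False unfolding Tl_def by auto
  qed
  hence "\<exists>S. S \<subseteq> {0..<n} \<and> card S = card (Tl' j n) \<and> H_free (path_V k) path_E ({0..<n} - S) (Eof (run A k))"
    by (intro exI[of _ "Tl' j n"]) (auto simp: Tl_def)
  thus ?thesis unfolding OPT_def by (rule Least_le)
qed

end


definition lC :: "algorithm \<Rightarrow> nat \<Rightarrow> nat \<Rightarrow> nat \<Rightarrow> nat" where
  "lC A k n v = (if v < n then run A k v else Suc ((v - n) mod (k - 1)))"

definition NC :: "nat \<Rightarrow> nat \<Rightarrow> nat" where
  "NC k n = n + (k - 1) * (n + 1)"

context
  fixes A :: algorithm and k :: nat
  assumes valid: "valid_alg (path_V k) path_E A" and k4: "k \<ge> 4"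
begin

lemma k1: "k \<ge> 1" using k4 by simp

lemma lC_lt: "lC A k n v < k"
proof (cases "v < n")
  case True then show ?thesis using run_lt[OF valid k1] by (simp add: lC_def)
next
  case False
  have "(v - n) mod (k - 1) < k - 1" using k4 by simp
  hence "Suc ((v - n) mod (k - 1)) < k" using k4 by linarith
  then show ?thesis using False by (simp add: lC_def)
qed

lemma T0C: "{v. v < NC k n \<and> lC A k n v = 0} = Tl A k 0 n"
  unfolding Tl_def lC_def NC_def by auto

lemma bigC:
  assumes j: "1 \<le> j" "j < k"
  shows "card {v. v < NC k n \<and> lC A k n v = j} \<ge> n + 1"
proof -
  define g where "g s = n + (j - 1) + (k - 1) * s" for s
  have sub: "g ` {0..n} \<subseteq> {v. v < NC k n \<and> lC A k n v = j}"
  proof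
    fix x assume "x \<in> g ` {0..n}"
    then obtain s where s: "s \<le> n" "x = g s" by auto
    have a: "(k - 1) * s \<le> (k - 1) * n" using s by simp
    have b: "j - 1 < k - 1" using j by linarith
    have c: "(k - 1) * (n + 1) = (k - 1) * n + (k - 1)" by (simp only: distrib_left mult_1_right)
    have "x = n + (j - 1) + (k - 1) * s" using s unfolding g_def by simp
    hence "x < NC k n" unfolding NC_def using a b c by linarith
    moreover have "(x - n) mod (k - 1) = j - 1"
    proof -
      have "x - n = (j - 1) + (k - 1) * s" using s unfolding g_def by simp
      moreover have "j - 1 < k - 1" using j by simp
      ultimately show ?thesis by simp
    qed
    ultimately show "x \<in> {v. v < NC k n \<and> lC A k n v = j}"
      using j unfolding lC_def g_def s by auto
  qed
  have inj: "inj_on g {0..n}"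
  proof (rule inj_onI)
    fix a b assume "g a = g b"
    hence "(k - 1) * a = (k - 1) * b" unfolding g_def by simp
    thus "a = b" using k4 by simp
  qed
  have fin: "finite {v. v < NC k n \<and> lC A k n v = j}" by simp
  have "card (g ` {0..n}) \<le> card {v. v < NC k n \<and> lC A k n v = j}"
    by (rule card_mono[OF fin sub])
  moreover have "card (g ` {0..n}) = card {0..n}" by (rule card_image[OF inj])
  ultimately have "card {0..n} \<le> card {v. v < NC k n \<and> lC A k n v = j}" by simp
  thus ?thesis by simp
qed

lemma layer_in:
  assumes "H_free (path_V k) path_E ({0..<NC k n} - X) (Eof (lC A k n))"
  shows "\<exists>i<k. {v. v < NC k n \<and> lC A k n v = i} \<subseteq> X"
proof (rule ccontr)
  assume neg: "\<not> ?thesis"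
  have "\<forall>i<k. \<exists>v\<in>{0..<NC k n} - X. lC A k n v = i"
  proof (intro allI impI)
    fix i assume "i < k"
    with neg have "\<not> {v. v < NC k n \<and> lC A k n v = i} \<subseteq> X" by blast
    then obtain v where "v < NC k n" "lC A k n v = i" "v \<notin> X" by blast
    thus "\<exists>v\<in>{0..<NC k n} - X. lC A k n v = i" by auto
  qed
  from transversal_copy[OF this] assms show False unfolding H_free_def by auto
qed

lemma free0: "H_free (path_V k) path_E ({0..<NC k n} - Tl A k 0 n) (Eof (lC A k n))"
  unfolding H_free_def
proof
  assume "has_induced_copy (path_V k) path_E ({0..<NC k n} - Tl A k 0 n) (Eof (lC A k n))"
  from copy_hits_layers[OF k4 _ this, of 0] lC_lt k4 obtain v where
    "v \<in> {0..<NC k n} - Tl A k 0 n" "lC A k n v = 0" by auto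
  thus False using T0C[of n] by auto
qed

lemma OPT_C_le: "OPT (path_V k) path_E (NC k n) (Eof (lC A k n)) \<le> card (Tl A k 0 n)"
proof -
  have "\<exists>S. S \<subseteq> {0..<NC k n} \<and> card S = card (Tl A k 0 n) \<and> H_free (path_V k) path_E ({0..<NC k n} - S) (Eof (lC A k n))"
    using free0 by (intro exI[of _ "Tl A k 0 n"]) (auto simp: Tl_def NC_def)
  thus ?thesis unfolding OPT_def by (rule Least_le)
qed

lemma correct_unique:
  assumes ca: "correct_advice (path_V k) path_E (NC k n) (Eof (lC A k n)) u"
  shows "{i. i < NC k n \<and> u i} = Tl A k 0 n"
    and "OPT (path_V k) path_E (NC k n) (Eof (lC A k n)) = card (Tl A k 0 n)"
proof -
  define Su where "Su = {i. i < NC k n \<and> u i}"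
  have fr: "H_free (path_V k) path_E ({0..<NC k n} - Su) (Eof (lC A k n))"
    and cs: "card Su = OPT (path_V k) path_E (NC k n) (Eof (lC A k n))"
    using ca unfolding correct_advice_def Su_def Let_def by auto
  have finSu: "finite Su" unfolding Su_def by simp
  obtain i where i: "i < k" "{v. v < NC k n \<and> lC A k n v = i} \<subseteq> Su"
    using layer_in[OF fr] by blast
  have cle: "card Su \<le> card (Tl A k 0 n)" using cs OPT_C_le by simp
  have "i = 0"
  proof (rule ccontr)
    assume "i \<noteq> 0"
    hence "card {v. v < NC k n \<and> lC A k n v = i} \<ge> n + 1" using bigC i by auto
    moreover have "card {v. v < NC k n \<and> lC A k n v = i} \<le> card Su" using i finSu by (simp add: card_mono)
    moreover have "card (Tl A k 0 n) \<le> n"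
    proof -
      have "Tl A k 0 n \<subseteq> {0..<n}" unfolding Tl_def by auto
      from card_mono[OF _ this] show ?thesis by simp
    qed
    ultimately show False using cle by linarith
  qed
  hence sub: "Tl A k 0 n \<subseteq> Su" using i T0C by auto
  have "Tl A k 0 n = Su" using card_subset_eq[OF finSu sub] cle card_mono[OF finSu sub] by simp
  thus "{i. i < NC k n \<and> u i} = Tl A k 0 n" unfolding Su_def by simp
  show "OPT (path_V k) path_E (NC k n) (Eof (lC A k n)) = card (Tl A k 0 n)"
    using cs \<open>Tl A k 0 n = Su\<close> by simp
qed

end


context
  fixes A :: algorithm and k :: nat
  assumes valid: "valid_alg (path_V k) path_E A" and k4: "k \<ge> 4"
begin

lemma cons_cost:
  assumes n1: "n \<ge> 1"
    and ca: "correct_advice (path_V k) path_E (NC k n) (Eof (lC A k n)) u"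
  shows "card (alg_set A (Eof (lC A k n)) u (NC k n)) + (k - 1) \<ge> n"
proof -
  have k1: "k \<ge> 1" using k4 by simp
  have nN: "n \<le> NC k n" unfolding NC_def by simp
  have U: "{i. i < NC k n \<and> u i} = Tl A k 0 n" using correct_unique[OF valid k4 ca] by simp
  have agree: "alg_set A (Eof (lC A k n)) u n = alg_set A (Eof (run A k)) (Uof (run A k)) n"
  proof -
    have "restrictE n (Eof (lC A k n)) = restrictE n (Eof (run A k))"
    proof (intro ext)
      fix x y
      show "restrictE n (Eof (lC A k n)) x y = restrictE n (Eof (run A k)) x y"
        unfolding restrictE_def Eof_def lC_def by simp
    qed
    moreover have "restrictU n u = restrictU n (Uof (run A k))"
    proof (intro ext)
      fix i
      show "restrictU n u i = restrictU n (Uof (run A k)) i"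
      proof (cases "i < n")
        case True
        hence "i < NC k n" using nN by simp
        hence "u i = (i \<in> {i. i < NC k n \<and> u i})" by simp
        hence "u i = (i \<in> Tl A k 0 n)" by (simp only: U)
        thus ?thesis using True unfolding restrictU_def Uof_def Tl_def by auto
      qed (simp add: restrictU_def)
    qed
    ultimately show ?thesis unfolding alg_set_def by simp
  qed
  define SN where "SN = alg_set A (Eof (lC A k n)) u (NC k n)"
  have NC1: "NC k n \<ge> 1" using n1 nN by simp
  have vf: "H_free (path_V k) path_E ({0..<NC k n} - SN) (Eof (lC A k n)) \<and> SN \<subseteq> {0..<NC k n}"
    unfolding SN_def by (rule valid_free[OF valid simple_Eof NC1])
  have fin: "finite SN" using vf finite_subset by blast
  have mono: "alg_set A (Eof (run A k)) (Uof (run A k)) n \<subseteq> SN"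
    unfolding SN_def agree[symmetric] by (rule valid_mono[OF valid simple_Eof n1 nN])
  obtain i where i: "i < k" "{v. v < NC k n \<and> lC A k n v = i} \<subseteq> SN"
    using layer_in[OF valid k4] vf by blast
  show ?thesis
  proof (cases "i = 0")
    case True
    hence "Tl A k 0 n \<subseteq> SN" using i T0C[OF valid k4] by auto
    with mono have "alg_set A (Eof (run A k)) (Uof (run A k)) n \<union> Tl A k 0 n \<subseteq> SN" by auto
    from card_cons[OF valid k1 fin this] show ?thesis unfolding SN_def .
  next
    case False
    hence "card {v. v < NC k n \<and> lC A k n v = i} \<ge> n + 1" using bigC[OF valid k4] i by auto
    moreover have "card {v. v < NC k n \<and> lC A k n v = i} \<le> card SN" using i fin by (simp add: card_mono)
    ultimately show ?thesis unfolding SN_def by linarith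
  qed
qed

end


lemma key_ineq:
  fixes k :: nat and p r w :: real
  assumes "k \<ge> 5" "0 \<le> p" "p < 1" "r < real k - p * (real k - 1)" "w < real k + p / (1 - p)"
    "r > 0" "w > 0"
  shows "r * (w - real k + 1) < w"
proof (cases "w - real k + 1 \<le> 0")
  case True
  have "r * (w - real k + 1) \<le> 0" using True assms(6) by (intro mult_nonneg_nonpos) auto
  then show ?thesis using assms(7) by linarith
next
  case False
  have pp: "1 - p > 0" using assms by simp
  have "(1 - p) * w < (1 - p) * (real k + p / (1 - p))"
    using assms(5) pp by (rule mult_strict_left_mono)
  also have "\<dots> = (1 - p) * real k + p" using pp by (simp add: field_simps)
  finally have w1: "(1 - p) * w < (1 - p) * real k + p" .
  have "r * (w - real k + 1) < (real k - p * (real k - 1)) * (w - real k + 1)"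
    using assms(4) False by (intro mult_strict_right_mono) auto
  also have "\<dots> = w + (real k - 1) * ((1 - p) * w - ((1 - p) * real k + p))"
    by (simp add: algebra_simps)
  also have "\<dots> \<le> w"
  proof -
    have "(real k - 1) * ((1 - p) * w - ((1 - p) * real k + p)) \<le> 0"
      using w1 assms(1) by (intro mult_nonneg_nonpos) auto
    thus ?thesis by simp
  qed
  finally show ?thesis .
qed

theorem mainTheorem9:
  fixes k :: nat and p :: real
  assumes "k \<ge> 5" and "0 \<le> p" and "p < 1"
  shows "\<not> (\<exists>A r w. valid_alg (path_V k) path_E A \<and>
                    competitive (path_V k) path_E A r w \<and>
                    r < real k - p * (real k - 1) \<and>
                    w < real k + p / (1 - p))"
proof
  assume "\<exists>A r w. valid_alg (path_V k) path_E A \<and>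
                    competitive (path_V k) path_E A r w \<and>
                    r < real k - p * (real k - 1) \<and>
                    w < real k + p / (1 - p)"
  then obtain A r w where valid: "valid_alg (path_V k) path_E A"
    and comp: "competitive (path_V k) path_E A r w"
    and hr: "r < real k - p * (real k - 1)" and hw: "w < real k + p / (1 - p)" by blast
  have k4: "k \<ge> 4" and k1: "k \<ge> 1" using assms(1) by auto
  obtain \<alpha> :: real where a0: "\<alpha> \<ge> 0" and H: "\<And>n E. simple_graph E \<Longrightarrow>
           (\<exists>u. correct_advice (path_V k) path_E n E u \<and>
                real (alg_cost A n E u) \<le> r * real (OPT (path_V k) path_E n E) + \<alpha>) \<and>
           (\<forall>u. real (alg_cost A n E u) \<le> w * real (OPT (path_V k) path_E n E) + \<alpha>)"
    using comp unfolding competitive_def by blast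
  define c where "c j n = real (card (Tl A k j n))" for j n
  have R: "real n - real k \<le> w * real (OPT (path_V k) path_E n (Eof (run A k))) + \<alpha>" if "n \<ge> 1" for n
  proof -
    have "real (alg_cost A n (Eof (run A k)) (Uof (run A k))) \<le> w * real (OPT (path_V k) path_E n (Eof (run A k))) + \<alpha>"
      using H[OF simple_Eof] by blast
    moreover have "alg_cost A n (Eof (run A k)) (Uof (run A k)) = card (alg_set A (Eof (run A k)) (Uof (run A k)) n)"
      using that unfolding alg_cost_def by simp
    moreover have "card (alg_set A (Eof (run A k)) (Uof (run A k)) n) + k \<ge> n" by (rule card_S[OF valid k1])
    ultimately show ?thesis by linarith
  qed
  have Rj: "real n - real k \<le> w * c j n + \<alpha>" if "n \<ge> 1" "j < k" "w \<ge> 0" for n j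
  proof -
    have "real (OPT (path_V k) path_E n (Eof (run A k))) \<le> c j n"
      using OPT_R[OF valid k1 k4 that(2)] unfolding c_def by simp
    hence "w * real (OPT (path_V k) path_E n (Eof (run A k))) \<le> w * c j n"
      using that(3) by (rule mult_left_mono)
    thus ?thesis using R[OF that(1)] by linarith
  qed
  have R0: "real n - real k \<le> \<alpha>" if "n \<ge> 1" "w \<le> 0" for n
  proof -
    have "w * real (OPT (path_V k) path_E n (Eof (run A k))) \<le> 0"
      using that(2) by (simp add: mult_nonpos_nonneg)
    thus ?thesis using R[OF that(1)] by linarith
  qed
  have C: "real n - (real k - 1) \<le> r * c 0 n + \<alpha>" if "n \<ge> 1" for n
  proof -
    obtain u where ca: "correct_advice (path_V k) path_E (NC k n) (Eof (lC A k n)) u"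
      and cb: "real (alg_cost A (NC k n) (Eof (lC A k n)) u) \<le> r * real (OPT (path_V k) path_E (NC k n) (Eof (lC A k n))) + \<alpha>"
      using H[OF simple_Eof] by blast
    have "OPT (path_V k) path_E (NC k n) (Eof (lC A k n)) = card (Tl A k 0 n)"
      using correct_unique(2)[OF valid k4 ca] .
    moreover have "NC k n \<noteq> 0" using that unfolding NC_def by simp
    moreover have "card (alg_set A (Eof (lC A k n)) u (NC k n)) + (k - 1) \<ge> n"
      by (rule cons_cost[OF valid k4 that ca])
    ultimately show ?thesis using cb k1 unfolding alg_cost_def c_def by auto
  qed
  have C0: "real n - (real k - 1) \<le> \<alpha>" if "n \<ge> 1" "r \<le> 0" for n
  proof -
    have "r * c 0 n \<le> 0" using that(2) unfolding c_def by (simp add: mult_nonpos_nonneg)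
    thus ?thesis using C[OF that(1)] by linarith
  qed
  have Sum: "real n = c 0 n + (\<Sum>j\<in>{1..<k}. c j n)" for n
    using arg_cong[OF sum_layers[OF valid k1, of n], of real] unfolding c_def by simp
  obtain n0 :: nat where n0: "real n0 > real k + \<alpha>" using reals_Archimedean2 by blast
  show False
  proof (cases "w \<le> 0")
    case True
    have "real (max n0 1) - real k \<le> \<alpha>" using R0[of "max n0 1"] True by simp
    thus False using n0 by simp
  next
    case wpos: False
    show False
    proof (cases "r \<le> 0")
      case True
      have "real (max n0 1) - (real k - 1) \<le> \<alpha>" using C0[of "max n0 1"] True by simp
      thus False using n0 by simp
    next
      case rpos: False
      define \<gamma> where "\<gamma> = w - r * (w - real k + 1)"
      have g0: "\<gamma> > 0" using key_ineq[OF assms hr hw] rpos wpos unfolding \<gamma>_def by simp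
      obtain n1 :: nat where n1: "real n1 > (r * (real k - 1) * (real k + \<alpha>) + w * (real k - 1 + \<alpha>)) / \<gamma>"
        using reals_Archimedean2 by blast
      define n where "n = max n1 1"
      have n1': "n \<ge> 1" unfolding n_def by simp
      have nbig: "real n * \<gamma> > r * (real k - 1) * (real k + \<alpha>) + w * (real k - 1 + \<alpha>)"
      proof -
        have "real n \<ge> real n1" unfolding n_def by simp
        hence "real n > (r * (real k - 1) * (real k + \<alpha>) + w * (real k - 1 + \<alpha>)) / \<gamma>" using n1 by linarith
        thus ?thesis using g0 by (simp add: divide_less_eq)
      qed
      have "(\<Sum>j\<in>{1..<k}. real n - real k - \<alpha>) \<le> (\<Sum>j\<in>{1..<k}. w * c j n)"
        using Rj[OF n1' _] wpos by (intro sum_mono) (auto simp: algebra_simps)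
      hence s1: "(real k - 1) * (real n - real k - \<alpha>) \<le> w * (real n - c 0 n)"
        using Sum[of n] k1 by (simp add: sum_distrib_left[symmetric] of_nat_diff)
      have s2: "real n - (real k - 1) - \<alpha> \<le> r * c 0 n" using C[OF n1'] by linarith
      have "r * ((real k - 1) * (real n - real k - \<alpha>)) \<le> r * (w * (real n - c 0 n))"
        using s1 rpos by (intro mult_left_mono) auto
      moreover have "w * (real n - (real k - 1) - \<alpha>) \<le> w * (r * c 0 n)"
        using s2 wpos by (intro mult_left_mono) auto
      ultimately have "r * ((real k - 1) * (real n - real k - \<alpha>)) + w * (real n - (real k - 1) - \<alpha>)
          \<le> r * (w * real n)" by (simp add: algebra_simps)
      hence "real n * \<gamma> \<le> r * (real k - 1) * (real k + \<alpha>) + w * (real k - 1 + \<alpha>)"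
        unfolding \<gamma>_def by (simp add: algebra_simps)
      thus False using nbig by linarith
    qed
  qed
qed



end
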